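(* Let $F$ be a field, $t\ge 3$, and let $e_1,\dots,e_t$, $n_i$, $\sigma_i$ and $V$ be as follows: $e_1,\dots,e_t\in M_n(F)$ are nonzero pairwise orthogonal idempotents with $e_1+\cdots+e_t=I_n$, $n_i=\mathrm{rank}(e_i)$, $\sigma_1,\dots,\sigma_t\in F$ satisfy $\sum_i\sigma_ik_i\ne0$ for every integer tuple $\vec 0\ne(k_1,\dots,k_t)$ with $0\le k_i\le n_i$, and $V=\{a\in M_n(F): e_iae_j=0\ \forall i<j,\ \sum_i\sigma_i\mathrm{Tr}(e_iae_i)=0\}$. Let $u\in e_1M_n(F)e_2$ and $w\in e_2M_n(F)e_3$ with $uw\ne 0$. Then $U=F(u+w)+V$ is a Mathieu subspace of $M_n(F)$ containing $V$ as a proper subspace; in particular $V$ is not a maximal Mathieu subspace of $M_n(F)$.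
   Context: Let $\mathcal A$ be an associative algebra over a field $F$. An $F$-subspace $M\subseteq\mathcal A$ is a Mathieu subspace (MS) of $\mathcal A$ if for all $a,b,c\in\mathcal A$ such that $a^m\in M$ for all $m\ge 1$, there exists $N$ (depending on $a,b,c$) such that $ba^mc\in M$ for all $m\ge N$. A maximal MS of $\mathcal A$ is a proper MS of $\mathcal A$ that is not properly contained in any proper MS of $\mathcal A$. *)

theory Defs
  imports "HOL-Analysis.Analysis"
begin

text \<open>Square matrices M_n(F) are rendered as the type 'a^'n^'n over a field 'a,
  with matrix product (**), identity mat 1, library rank and trace.\<close>

definition mscale :: "'a::field \<Rightarrow> 'a^'n^'n \<Rightarrow> 'a^'n^'n" where
  "mscale c A = (\<chi> i j. c * A $ i $ j)"

definition mpow :: "'a::field^'n^'n \<Rightarrow> nat \<Rightarrow> 'a^'n^'n" where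
  "mpow A m = (((**) A) ^^ m) (mat 1)"

definition F_subspace :: "('a::field^'n^'n) set \<Rightarrow> bool" where
  "F_subspace M \<longleftrightarrow> 0 \<in> M \<and> (\<forall>x\<in>M. \<forall>y\<in>M. x + y \<in> M) \<and> (\<forall>c. \<forall>x\<in>M. mscale c x \<in> M)"

definition mathieu_subspace :: "('a::field^'n^'n) set \<Rightarrow> bool" where
  "mathieu_subspace M \<longleftrightarrow> F_subspace M \<and>
     (\<forall>a b c. (\<forall>m\<ge>1. mpow a m \<in> M) \<longrightarrow> (\<exists>N. \<forall>m\<ge>N. b ** mpow a m ** c \<in> M))"

definition maximal_mathieu_subspace :: "('a::field^'n^'n) set \<Rightarrow> bool" where
  "maximal_mathieu_subspace M \<longleftrightarrow> mathieu_subspace M \<and> M \<noteq> UNIV \<and>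
     \<not> (\<exists>M'. mathieu_subspace M' \<and> M' \<noteq> UNIV \<and> M \<subset> M')"

end

theory Submission
  imports Defs
begin


lemma matrix_add_rdistrib': "((B + C) ** A) = (B ** A) + (C ** A)" for A :: "'a::field^'p^'n" and B C :: "'a^'n^'m"
  by (vector matrix_matrix_mult_def sum.distrib[symmetric] field_simps)

lemma mscale_eq: "mscale c A = mat c ** A"
  by (simp add: mscale_def matrix_matrix_mult_def mat_def vec_eq_iff if_distrib if_distribR sum.delta cong: if_cong)

lemma mscale_mult_left: "mscale c A ** B = mscale c (A ** B)"
  by (simp add: mscale_eq matrix_mul_assoc)

lemma mscale_mult_right: "A ** mscale c B = mscale c (A ** B)"
  by (simp add: mscale_def matrix_matrix_mult_def vec_eq_iff sum_distrib_left mult.left_commute)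

lemma mscale_add: "mscale c (A + B) = mscale c A + mscale c B"
  by (simp add: mscale_def vec_eq_iff distrib_left)

lemma mscale_add2: "mscale (c + d) A = mscale c A + mscale d A"
  by (simp add: mscale_def vec_eq_iff distrib_right)

lemma mscale_mscale: "mscale c (mscale d A) = mscale (c*d) A"
  by (simp add: mscale_def vec_eq_iff mult.assoc)

lemma mscale_0[simp]: "mscale 0 A = 0" and mscale_1[simp]: "mscale 1 A = A" and mscale_z[simp]: "mscale c 0 = 0"
  by (simp_all add: mscale_def vec_eq_iff)

lemma trace_mscale: "trace (mscale c A) = c * trace A"
  by (simp add: mscale_def trace_def sum_distrib_left)

lemma mult_sum_left: "A ** sum f S = (\<Sum>x\<in>S. A ** f x)" for A :: "'a::field^'n^'n"
  by (induction S rule: infinite_finite_induct) (simp_all add: matrix_add_ldistrib)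

lemma mult_sum_right: "sum f S ** A = (\<Sum>x\<in>S. f x ** A)" for A :: "'a::field^'n^'n"
  by (induction S rule: infinite_finite_induct) (simp_all add: matrix_add_rdistrib')

lemma trace_sum: "trace (sum f S) = (\<Sum>x\<in>S. trace (f x))" for f :: "_ \<Rightarrow> 'a::field^'n^'n"
  by (induction S rule: infinite_finite_induct) (simp_all add: trace_add flip: mat_0 add: trace_0)

lemma mscale_sum: "mscale c (sum f S) = (\<Sum>x\<in>S. mscale c (f x))"
  by (induction S rule: infinite_finite_induct) (simp_all add: mscale_add)

lemma mpow_0[simp]: "mpow A 0 = mat 1" and mpow_Suc: "mpow A (Suc m) = A ** mpow A m"
  by (simp_all add: mpow_def)

lemma mpow_1[simp]: "mpow A (Suc 0) = A"
  by (simp add: mpow_Suc)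

lemma mpow_add: "mpow A (m + n) = mpow A m ** mpow A n"
  by (induction m) (simp_all add: mpow_Suc matrix_mul_assoc)

lemma mpow_comm: "A ** mpow A m = mpow A m ** A"
  by (metis mpow_1 mpow_add add.commute plus_1_eq_Suc)

lemma mpow_mult_comm: assumes "A ** B = B ** A" shows "mpow (A ** B) k = mpow A k ** mpow B k"
proof -
  have c: "B ** mpow A k = mpow A k ** B" for k
    by (induction k) (simp_all add: mpow_Suc matrix_mul_assoc assms,
        metis matrix_mul_assoc assms)
  show ?thesis
    by (induction k) (simp_all add: mpow_Suc matrix_mul_assoc, metis matrix_mul_assoc c)
qed



locale blk =
  fixes e :: "nat \<Rightarrow> 'a::field^'n^'n" and t :: nat
  assumes idem: "\<forall>i\<in>{1..t}. e i ** e i = e i"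
    and orth: "\<forall>i\<in>{1..t}. \<forall>j\<in>{1..t}. i \<noteq> j \<longrightarrow> e i ** e j = 0"
    and sum_id: "(\<Sum>i=1..t. e i) = mat 1"
begin

definition blow :: "'a^'n^'n \<Rightarrow> bool" where
  "blow X \<longleftrightarrow> (\<forall>i\<in>{1..t}. \<forall>j\<in>{1..t}. i < j \<longrightarrow> e i ** X ** e j = 0)"

lemma insert_id: "e i ** X ** Y ** e j = (\<Sum>l=1..t. (e i ** X ** e l) ** (e l ** Y ** e j))"
proof -
  have "e i ** X ** Y ** e j = e i ** X ** mat 1 ** Y ** e j" by simp
  also have "\<dots> = (\<Sum>l=1..t. e i ** X ** e l ** Y ** e j)"
    by (simp add: sum_id[symmetric] mult_sum_left mult_sum_right)
  also have "\<dots> = (\<Sum>l=1..t. (e i ** X ** e l) ** (e l ** Y ** e j))"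
  proof (rule sum.cong)
    fix l assume "l \<in> {1..t}"
    then have "e l = e l ** e l" using idem by auto
    then have "e i ** X ** e l ** Y ** e j = e i ** X ** (e l ** e l) ** Y ** e j" by simp
    then show "e i ** X ** e l ** Y ** e j = (e i ** X ** e l) ** (e l ** Y ** e j)"
      by (simp add: matrix_mul_assoc)
  qed simp
  finally show ?thesis .
qed

lemma decomp: "X = (\<Sum>i=1..t. \<Sum>j=1..t. e i ** X ** e j)"
proof -
  have "X = (\<Sum>i=1..t. e i) ** X ** (\<Sum>j=1..t. e j)" by (simp only: sum_id matrix_mul_lid matrix_mul_rid)
  also have "\<dots> = (\<Sum>j=1..t. \<Sum>i=1..t. e i ** X ** e j)" by (simp only: mult_sum_left mult_sum_right)
  also have "\<dots> = (\<Sum>i=1..t. \<Sum>j=1..t. e i ** X ** e j)" by (rule sum.swap)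
  finally show ?thesis .
qed

lemma blow_mult: assumes "blow X" "blow Y" shows "blow (X ** Y)"
  unfolding blow_def
proof (intro ballI impI)
  fix i j assume ij: "i \<in> {1..t}" "j \<in> {1..t}" "i < j"
  have "e i ** (X ** Y) ** e j = (\<Sum>l=1..t. (e i ** X ** e l) ** (e l ** Y ** e j))"
    by (simp only: matrix_mul_assoc[of "e i" X Y] insert_id)
  also have "\<dots> = 0"
  proof (rule sum.neutral, rule ballI)
    fix l assume l: "l \<in> {1..t}"
    show "(e i ** X ** e l) ** (e l ** Y ** e j) = 0"
    proof (cases "i < l")
      case True then show ?thesis using assms(1) ij l by (simp add: blow_def)
    next
      case False then have "l < j" using ij by simp
      then show ?thesis using assms(2) ij l by (simp add: blow_def)
    qed
  qed
  finally show "e i ** (X ** Y) ** e j = 0" .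
qed

lemma blow_one: "blow (mat 1)"
  using orth by (simp add: blow_def)

lemma blow_mpow: "blow X \<Longrightarrow> blow (mpow X m)"
  by (induction m) (simp_all add: blow_one mpow_Suc blow_mult)

lemma diag_mult: assumes "blow X" "blow Y" "i \<in> {1..t}"
  shows "e i ** X ** Y ** e i = (e i ** X ** e i) ** (e i ** Y ** e i)"
proof -
  have "e i ** X ** Y ** e i = (\<Sum>l=1..t. (e i ** X ** e l) ** (e l ** Y ** e i))"
    by (rule insert_id)
  also have "\<dots> = (\<Sum>l\<in>{1..t}. if l = i then (e i ** X ** e i) ** (e i ** Y ** e i) else 0)"
  proof (rule sum.cong)
    fix l assume l: "l \<in> {1..t}"
    show "(e i ** X ** e l) ** (e l ** Y ** e i) = (if l = i then (e i ** X ** e i) ** (e i ** Y ** e i) else 0)"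
    proof (cases "l = i")
      case False
      show ?thesis
      proof (cases "i < l")
        case True then show ?thesis using assms l by (simp add: blow_def)
      next
        case F: False then have "l < i" using False by simp
        then show ?thesis using assms l by (simp add: blow_def)
      qed
    qed simp
  qed simp
  also have "\<dots> = (e i ** X ** e i) ** (e i ** Y ** e i)"
    using assms(3) by simp
  finally show ?thesis .
qed

end


inductive_set polys :: "'a::field^'n^'n \<Rightarrow> ('a^'n^'n) set" for a where
  p1: "mat 1 \<in> polys a"
| pa: "X \<in> polys a \<Longrightarrow> a ** X \<in> polys a"
| padd: "X \<in> polys a \<Longrightarrow> Y \<in> polys a \<Longrightarrow> X + Y \<in> polys a"
| psc: "X \<in> polys a \<Longrightarrow> mscale c X \<in> polys a"

lemma polys_0: "0 \<in> polys a"
  using psc[OF p1, where c=0] by simp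

lemma polys_sum: "(\<And>x. x \<in> S \<Longrightarrow> f x \<in> polys a) \<Longrightarrow> sum f S \<in> polys a"
  by (induction S rule: infinite_finite_induct) (auto intro: polys_0 padd)

lemma polys_mpow: "mpow a k \<in> polys a"
  by (induction k) (auto simp: mpow_Suc intro: p1 pa)

lemma polys_comm_a: "X \<in> polys a \<Longrightarrow> a ** X = X ** a"
  by (induction rule: polys.induct)
     (simp_all add: matrix_mul_assoc matrix_add_ldistrib matrix_add_rdistrib' mscale_mult_left mscale_mult_right)

lemma polys_mult: "X \<in> polys a \<Longrightarrow> Y \<in> polys a \<Longrightarrow> X ** Y \<in> polys a"
  by (induction rule: polys.induct)
     (auto simp: matrix_mul_assoc[symmetric] matrix_add_rdistrib' mscale_mult_left intro: pa padd psc)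

lemma polys_comm: "X \<in> polys a \<Longrightarrow> Y \<in> polys a \<Longrightarrow> X ** Y = Y ** X"
proof (induction rule: polys.induct)
  case (pa X)
  then have "a ** X ** Y = a ** (Y ** X)" by (simp add: matrix_mul_assoc[symmetric])
  also have "\<dots> = (a ** Y) ** X" by (simp add: matrix_mul_assoc)
  also have "\<dots> = Y ** (a ** X)" using polys_comm_a[OF pa.prems] by (simp add: matrix_mul_assoc)
  finally show ?case .
qed (simp_all add: matrix_add_ldistrib matrix_add_rdistrib' mscale_mult_left mscale_mult_right)

lemma polys_mpow2: "X \<in> polys a \<Longrightarrow> mpow X k \<in> polys a"
  by (induction k) (auto simp: mpow_Suc intro: p1 polys_mult)

lemma polys_in_S:
  assumes S: "F_subspace S" and pw: "\<forall>m\<ge>1. mpow a m \<in> S" and X: "X \<in> polys a"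
  shows "\<forall>m\<ge>1. mpow a m ** X \<in> S"
  using X
proof (induction rule: polys.induct)
  case p1 then show ?case using pw by simp
next
  case (pa X)
  show ?case
  proof (intro allI impI)
    fix m :: nat assume "m \<ge> 1"
    have "mpow a m ** (a ** X) = mpow a (Suc m) ** X"
      by (simp add: matrix_mul_assoc mpow_comm mpow_Suc)
    then show "mpow a m ** (a ** X) \<in> S" using pa by simp
  qed
next
  case (padd X Y) then show ?case using S by (simp add: F_subspace_def matrix_add_ldistrib)
next
  case (psc X c) then show ?case using S by (simp add: F_subspace_def mscale_mult_right)
qed



definition flat :: "'a::field^'n^'n \<Rightarrow> 'a^('n \<times> 'n)" where
  "flat A = (\<chi> p. A $ fst p $ snd p)"

lemma flat_add: "flat (A + B) = flat A + flat B"
  by (simp add: flat_def vec_eq_iff)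
lemma flat_mscale: "flat (mscale c A) = c *s flat A"
  by (simp add: flat_def vec_eq_iff mscale_def)
lemma flat_0: "flat 0 = 0"
  by (simp add: flat_def vec_eq_iff)
lemma flat_sum: "flat (sum f S) = (\<Sum>x\<in>S. flat (f x))"
  by (induction S rule: infinite_finite_induct) (simp_all add: flat_0 flat_add)
lemma flat_inj: "flat A = flat B \<Longrightarrow> A = B"
  by (simp add: flat_def vec_eq_iff)

lemma ann_rel:
  fixes a :: "'a::field^'n^'n"
  shows "\<exists>N L c. mpow a N = (\<Sum>m\<in>{Suc N..L}. mscale (c m) (mpow a m))"
proof -
  define K where "K = CARD('n \<times> 'n)"
  define f where "f m = flat (mpow a m)" for m
  show ?thesis
  proof (cases "inj_on f {0..K}")
    case False
    then obtain k l where kl: "k \<in> {0..K}" "l \<in> {0..K}" "k \<noteq> l" "f k = f l"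
      by (auto simp: inj_on_def)
    then obtain k l where kl: "k < l" "mpow a k = mpow a l"
      by (metis f_def flat_inj linorder_neqE_nat)
    have "(\<Sum>m\<in>{Suc k..l}. mscale (if m = l then 1 else 0) (mpow a m))
        = (\<Sum>m\<in>{Suc k..l}. if m = l then mpow a l else 0)"
      by (rule sum.cong) auto
    also have "\<dots> = mpow a l" using kl by simp
    finally show ?thesis using kl by metis
  next
    case True
    let ?S = "f ` {0..K}"
    have cardS: "card ?S = Suc K" using True by (simp add: card_image)
    have "\<not> vec.independent ?S"
    proof
      assume "vec.independent ?S"
      then have "card ?S \<le> vec.dim (UNIV :: ('a^('n\<times>'n)) set)"
        by (intro vec.independent_card_le_dim) auto
      moreover have "vec.dim (UNIV :: ('a^('n\<times>'n)) set) = K" by (simp only: K_def vec_dim_card)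
      ultimately show False using cardS by linarith
    qed
    then obtain c where c: "(\<Sum>v\<in>?S. c v *s v) = 0" "\<exists>v\<in>?S. c v \<noteq> 0"
      unfolding vec.independent_explicit by auto
    define d where "d m = c (f m)" for m
    have sum0: "(\<Sum>m\<in>{0..K}. d m *s f m) = 0"
      using c(1) by (simp add: sum.reindex[OF True] d_def)
    have ex: "\<exists>m. m \<le> K \<and> d m \<noteq> 0" using c(2) by (auto simp: d_def)
    define N where "N = (LEAST m. m \<le> K \<and> d m \<noteq> 0)"
    have N: "N \<le> K" "d N \<noteq> 0" using LeastI_ex[OF ex] by (simp_all add: N_def)
    have below: "m < N \<Longrightarrow> d m = 0" for m
      using not_less_Least[of m "\<lambda>m. m \<le> K \<and> d m \<noteq> 0"] N(1) by (auto simp: N_def)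
    have "(\<Sum>m\<in>{0..K}. d m *s f m) = (\<Sum>m\<in>{N..K}. d m *s f m)"
      by (rule sum.mono_neutral_right) (auto simp: below)
    also have "\<dots> = d N *s f N + (\<Sum>m\<in>{Suc N..K}. d m *s f m)"
      using N(1) by (simp add: sum.atLeast_Suc_atMost)
    finally have eq: "d N *s f N = - (\<Sum>m\<in>{Suc N..K}. d m *s f m)"
      using sum0 by (simp add: eq_neg_iff_add_eq_0)
    have "f N = (inverse (d N) * d N) *s f N" using N(2) by simp
    also have "\<dots> = inverse (d N) *s (d N *s f N)" by (simp add: vector_smult_assoc)
    also have "\<dots> = (\<Sum>m\<in>{Suc N..K}. (- d m / d N) *s f m)"
      unfolding eq by (simp add: vec.scale_sum_right vector_smult_assoc divide_inverse
          mult.commute sum_negf vec.scale_minus_left)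
    also have "\<dots> = flat (\<Sum>m\<in>{Suc N..K}. mscale (- d m / d N) (mpow a m))"
      by (simp add: flat_sum flat_mscale f_def)
    finally have "mpow a N = (\<Sum>m\<in>{Suc N..K}. mscale (- d m / d N) (mpow a m))"
      using flat_inj f_def by metis
    then show ?thesis by metis
  qed
qed



lemma row_mult: "row i (X ** Y) = (\<Sum>k\<in>UNIV. X$i$k *s row k Y)"
  for X :: "'a::field^'n^'n" and Y :: "'a^'n^'n"
  by (simp add: row_def matrix_matrix_mult_def vec_eq_iff)

lemma rank_mult_le: "rank (X ** Y) \<le> rank Y" for X Y :: "'a::field^'n^'n"
proof -
  have "rows (X ** Y) \<subseteq> vec.span (rows Y)"
  proof
    fix r assume "r \<in> rows (X ** Y)"
    then obtain i where r: "r = row i (X ** Y)" by (auto simp: rows_def)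
    show "r \<in> vec.span (rows Y)"
      unfolding r row_mult
      by (intro vec.span_sum vec.span_scale vec.span_base) (auto simp: rows_def)
  qed
  then have "vec.dim (rows (X ** Y)) \<le> vec.dim (vec.span (rows Y))"
    by (rule vec.dim_subset)
  then show ?thesis by (simp add: row_rank_def_gen)
qed

lemma vm_expand: "x v* Q = (\<Sum>i\<in>UNIV. x$i *s row i Q)" for Q :: "'a::field^'n^'n"
  by (simp add: vector_matrix_mult_def row_def vec_eq_iff mult.commute)

lemma trace_idem:
  fixes Q :: "'a::field^'n^'n"
  assumes QQ: "Q ** Q = Q"
  shows "trace Q = of_nat (rank Q) \<and> (rank Q = 0 \<longrightarrow> Q = 0)"
proof -
  obtain Bs where Bs: "Bs \<subseteq> rows Q" "vec.independent Bs" "rows Q \<subseteq> vec.span Bs"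
      "card Bs = vec.dim (rows Q)"
    using vec.basis_exists by blast
  have fin: "finite Bs" using Bs(2) vec.finiteI_independent by blast
  have rowsp: "row i Q \<in> vec.span Bs" for i using Bs(3) by (auto simp: rows_def)
  have rowfix: "row i Q v* Q = row i Q" for i
  proof -
    have "row i Q v* Q = row i (Q ** Q)"
      by (simp add: vector_matrix_mult_def row_def matrix_matrix_mult_def vec_eq_iff mult.commute)
    then show ?thesis using QQ by simp
  qed
  have fix_span: "x v* Q = x" if "x \<in> vec.span Bs" for x
    using that
  proof (induction rule: vec.span_induct_alt)
    case base then show ?case by simp
  next
    case (step c x y)
    then obtain i where "x = row i Q" using Bs(1) by (auto simp: rows_def)
    then show ?case using step rowfix
      by (simp add: vector_matrix_left_distrib scalar_vector_matrix_assoc)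
  qed
  let ?R = "vec.representation Bs"
  have one: "(\<Sum>i\<in>UNIV. b$i * ?R (row i Q) b) = 1" if b: "b \<in> Bs" for b
  proof -
    have bsp: "b \<in> vec.span Bs" using b by (simp add: vec.span_base)
    have "b = (\<Sum>i\<in>UNIV. b$i *s row i Q)"
      using fix_span[OF bsp] vm_expand by metis
    then have "?R b b = ?R (\<Sum>i\<in>UNIV. b$i *s row i Q) b" by simp
    also have "\<dots> = (\<Sum>i\<in>UNIV. ?R (b$i *s row i Q) b)"
      using Bs(2) by (simp add: vec.representation_sum vec.span_scale rowsp)
    also have "\<dots> = (\<Sum>i\<in>UNIV. b$i * ?R (row i Q) b)"
      using Bs(2) by (simp add: vec.representation_scale rowsp)
    finally show ?thesis using vec.representation_basis[OF Bs(2) b] by simp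
  qed
  have rowexp: "row i Q = (\<Sum>b\<in>Bs. ?R (row i Q) b *s b)" for i
    using vec.sum_representation_eq[OF Bs(2) rowsp fin] by simp
  have "trace Q = (\<Sum>i\<in>UNIV. (row i Q)$i)"
    by (simp add: trace_def row_def)
  also have "\<dots> = (\<Sum>i\<in>UNIV. \<Sum>b\<in>Bs. ?R (row i Q) b * b$i)"
    by (subst rowexp) simp
  also have "\<dots> = (\<Sum>b\<in>Bs. \<Sum>i\<in>UNIV. b$i * ?R (row i Q) b)"
    by (subst sum.swap) (simp add: mult.commute)
  also have "\<dots> = (\<Sum>b\<in>Bs. 1)" using one by simp
  also have "\<dots> = of_nat (rank Q)" by (simp add: row_rank_def_gen Bs(4))
  finally have tr: "trace Q = of_nat (rank Q)" .
  have "rank Q = 0 \<longrightarrow> Q = 0"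
  proof
    assume "rank Q = 0"
    then have "Bs = {}" using fin Bs(4) unfolding row_rank_def_gen by (metis card_0_eq)
    then have "row i Q = 0" for i using rowexp[of i] by simp
    then show "Q = 0" by (simp add: row_def vec_eq_iff)
  qed
  with tr show ?thesis by simp
qed



context blk begin

lemma S_sub: "F_subspace {X. blow X \<and> (\<Sum>i=1..t. \<sigma> i * trace (e i ** X ** e i)) = 0}"
  unfolding F_subspace_def
proof (intro conjI ballI allI)
  show "0 \<in> {X. blow X \<and> (\<Sum>i=1..t. \<sigma> i * trace (e i ** X ** e i)) = 0}"
    by (simp add: blow_def trace_def)
next
  fix x y assume x: "x \<in> {X. blow X \<and> (\<Sum>i=1..t. \<sigma> i * trace (e i ** X ** e i)) = 0}"
    and y: "y \<in> {X. blow X \<and> (\<Sum>i=1..t. \<sigma> i * trace (e i ** X ** e i)) = 0}"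
  show "x + y \<in> {X. blow X \<and> (\<Sum>i=1..t. \<sigma> i * trace (e i ** X ** e i)) = 0}"
    using x y by (simp add: blow_def matrix_add_ldistrib matrix_add_rdistrib' trace_add
        distrib_left sum.distrib)
next
  fix c x assume x: "x \<in> {X. blow X \<and> (\<Sum>i=1..t. \<sigma> i * trace (e i ** X ** e i)) = 0}"
  have "(\<Sum>i=1..t. \<sigma> i * trace (e i ** mscale c x ** e i)) = c * (\<Sum>i=1..t. \<sigma> i * trace (e i ** x ** e i))"
    by (simp add: mscale_mult_left mscale_mult_right trace_mscale sum_distrib_left mult.left_commute)
  then show "mscale c x \<in> {X. blow X \<and> (\<Sum>i=1..t. \<sigma> i * trace (e i ** X ** e i)) = 0}"
    using x by (simp add: blow_def mscale_mult_left mscale_mult_right)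
qed

lemma nilpotent:
  fixes \<sigma> :: "nat \<Rightarrow> 'a" and a :: "'a^'n^'n"
  assumes sigma_cond: "\<forall>k :: nat \<Rightarrow> nat. (\<forall>i\<in>{1..t}. k i \<le> rank (e i)) \<and> (\<exists>i\<in>{1..t}. k i \<noteq> 0)
                        \<longrightarrow> (\<Sum>i=1..t. \<sigma> i * of_nat (k i)) \<noteq> 0"
    and pw: "\<forall>m\<ge>1. mpow a m \<in> {X. blow X \<and> (\<Sum>i=1..t. \<sigma> i * trace (e i ** X ** e i)) = 0}"
  shows "\<exists>N. mpow a N = 0"
proof -
  let ?S = "{X. blow X \<and> (\<Sum>i=1..t. \<sigma> i * trace (e i ** X ** e i)) = 0}"
  obtain N L c where rel: "mpow a N = (\<Sum>m\<in>{Suc N..L}. mscale (c m) (mpow a m))"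
    using ann_rel by blast
  define G where "G = (\<Sum>m\<in>{Suc N..L}. mscale (c m) (mpow a (m - Suc N)))"
  have Gp: "G \<in> polys a" unfolding G_def by (intro polys_sum psc polys_mpow)
  define H where "H = a ** G"
  have Hp: "H \<in> polys a" unfolding H_def by (rule pa[OF Gp])
  have aNa: "mpow a N ** a = mpow a (Suc N)" by (simp add: mpow_Suc mpow_comm)
  have aNH: "mpow a N ** H = mpow a N"
  proof -
    have "mpow a N ** H = (\<Sum>m\<in>{Suc N..L}. mscale (c m) (mpow a N ** a ** mpow a (m - Suc N)))"
      by (simp add: H_def G_def mult_sum_left mscale_mult_right matrix_mul_assoc)
    also have "\<dots> = (\<Sum>m\<in>{Suc N..L}. mscale (c m) (mpow a m))"
    proof (rule sum.cong)
      fix m assume "m \<in> {Suc N..L}"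
      then have "mpow a m = mpow a (Suc N + (m - Suc N))" by simp
      then show "mscale (c m) (mpow a N ** a ** mpow a (m - Suc N)) = mscale (c m) (mpow a m)"
        by (simp only: aNa mpow_add)
    qed simp
    finally show ?thesis using rel by simp
  qed
  have aNHk: "mpow a N ** mpow H k = mpow a N" for k
    by (induction k) (simp_all add: mpow_Suc matrix_mul_assoc aNH)
  define P where "P = mpow H (Suc N)"
  have Pp: "P \<in> polys a" unfolding P_def by (rule polys_mpow2[OF Hp])
  have P_aN: "P ** mpow a N = mpow a N"
    using polys_comm[OF Pp polys_mpow] aNHk by (simp add: P_def)
  have PH: "P ** H = P"
  proof -
    have "P = mpow a (Suc N) ** mpow G (Suc N)"
      unfolding P_def H_def by (rule mpow_mult_comm[OF polys_comm_a[OF Gp]])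
    also have "\<dots> = mpow G (Suc N) ** mpow a (Suc N)"
      by (rule polys_comm[OF polys_mpow polys_mpow2[OF Gp]])
    also have "\<dots> = mpow G (Suc N) ** a ** mpow a N"
      by (simp add: mpow_Suc matrix_mul_assoc)
    finally have P: "P = mpow G (Suc N) ** a ** mpow a N" .
    have "P ** H = mpow G (Suc N) ** a ** (mpow a N ** H)"
      by (simp add: P matrix_mul_assoc)
    also have "\<dots> = P" by (simp add: aNH P)
    finally show ?thesis .
  qed
  have PHk: "P ** mpow H k = P" for k
    by (induction k) (simp_all add: mpow_Suc matrix_mul_assoc PH)
  have PP: "P ** P = P" using PHk[of "Suc N"] by (simp add: P_def)
  have PS: "P \<in> ?S"
  proof -
    have eqP: "P = mpow a 1 ** (G ** mpow H N)"
      by (simp add: P_def mpow_Suc H_def matrix_mul_assoc)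
    have X: "G ** mpow H N \<in> polys a" by (intro polys_mult Gp polys_mpow2 Hp)
    have "mpow a 1 ** (G ** mpow H N) \<in> ?S"
      using polys_in_S[OF S_sub pw X] by blast
    then show ?thesis using eqP by simp
  qed
  then have Pb: "blow P" and Ptr: "(\<Sum>i=1..t. \<sigma> i * trace (e i ** P ** e i)) = 0" by auto
  define Q where "Q i = e i ** P ** e i" for i
  have QQ: "Q i ** Q i = Q i" if "i \<in> {1..t}" for i
  proof -
    have "Q i ** Q i = e i ** P ** P ** e i"
      unfolding Q_def by (rule diag_mult[OF Pb Pb that, symmetric])
    also have "\<dots> = Q i" by (simp add: Q_def PP flip: matrix_mul_assoc)
    finally show ?thesis .
  qed
  define k where "k i = rank (Q i)" for i
  have kle: "\<forall>i\<in>{1..t}. k i \<le> rank (e i)"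
    unfolding k_def Q_def by (simp add: rank_mult_le)
  have "(\<Sum>i=1..t. \<sigma> i * of_nat (k i)) = (\<Sum>i=1..t. \<sigma> i * trace (e i ** P ** e i))"
    by (rule sum.cong) (simp_all add: k_def trace_idem[OF QQ] flip: Q_def)
  then have "(\<Sum>i=1..t. \<sigma> i * of_nat (k i)) = 0" using Ptr by simp
  then have "\<not> (\<exists>i\<in>{1..t}. k i \<noteq> 0)" using sigma_cond kle by blast
  then have Q0: "e i ** P ** e i = 0" if "i \<in> {1..t}" for i
    using trace_idem[OF QQ[OF that]] that by (simp add: k_def Q_def)
  have strict: "\<forall>i\<in>{1..t}. \<forall>j\<in>{1..t}. i < j + Suc r \<longrightarrow> e i ** P ** e j = 0" for r
  proof (induction r)
    case 0
    show ?case
    proof (intro ballI impI)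
      fix i j assume ij: "i \<in> {1..t}" "j \<in> {1..t}" "i < j + Suc 0"
      show "e i ** P ** e j = 0"
      proof (cases "i = j")
        case True then show ?thesis using Q0 ij by simp
      next
        case False then show ?thesis using Pb ij by (simp add: blow_def)
      qed
    qed
  next
    case (Suc r)
    show ?case
    proof (intro ballI impI)
      fix i j assume ij: "i \<in> {1..t}" "j \<in> {1..t}" "i < j + Suc (Suc r)"
      have "e i ** P ** e j = e i ** P ** P ** e j"
        by (simp add: PP flip: matrix_mul_assoc)
      also have "\<dots> = (\<Sum>l=1..t. (e i ** P ** e l) ** (e l ** P ** e j))"
        by (rule insert_id)
      also have "\<dots> = 0"
      proof (rule sum.neutral, rule ballI)
        fix l assume l: "l \<in> {1..t}"
        show "(e i ** P ** e l) ** (e l ** P ** e j) = 0"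
        proof (cases "l < i")
          case True
          then have "l < j + Suc r" using ij by simp
          then show ?thesis using Suc.IH l ij by simp
        next
          case False
          then have "i < l + Suc r" by simp
          then show ?thesis using Suc.IH l ij by simp
        qed
      qed
      finally show "e i ** P ** e j = 0" .
    qed
  qed
  have "P = (\<Sum>i=1..t. \<Sum>j=1..t. e i ** P ** e j)" by (rule decomp)
  also have "\<dots> = 0"
    using strict[of t] by (intro sum.neutral ballI) auto
  finally have "P = 0" .
  then have "mpow a N = 0" using P_aN by simp
  then show ?thesis by blast
qed

end


lemma mscale_eq0: "mscale c X = 0 \<Longrightarrow> c = 0 \<or> X = 0"
  by (auto simp: mscale_def vec_eq_iff)

declare One_nat_def[simp del]

theorem mainTheorem3:
  fixes e :: "nat \<Rightarrow> 'a::field^'n^'n"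
    and \<sigma> :: "nat \<Rightarrow> 'a"
    and t :: nat
    and V U :: "('a^'n^'n) set"
    and u w :: "'a^'n^'n"
  assumes t3: "t \<ge> 3"
    and nonzero: "\<forall>i\<in>{1..t}. e i \<noteq> 0"
    and idem: "\<forall>i\<in>{1..t}. e i ** e i = e i"
    and orth: "\<forall>i\<in>{1..t}. \<forall>j\<in>{1..t}. i \<noteq> j \<longrightarrow> e i ** e j = 0"
    and sum_id: "(\<Sum>i=1..t. e i) = mat 1"
    and sigma_cond: "\<forall>k :: nat \<Rightarrow> nat. (\<forall>i\<in>{1..t}. k i \<le> rank (e i)) \<and> (\<exists>i\<in>{1..t}. k i \<noteq> 0)
                        \<longrightarrow> (\<Sum>i=1..t. \<sigma> i * of_nat (k i)) \<noteq> 0"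
    and V_def: "V = {a. (\<forall>i\<in>{1..t}. \<forall>j\<in>{1..t}. i < j \<longrightarrow> e i ** a ** e j = 0) \<and>
                        (\<Sum>i=1..t. \<sigma> i * trace (e i ** a ** e i)) = 0}"
    and u_in: "\<exists>x. u = e 1 ** x ** e 2"
    and w_in: "\<exists>x. w = e 2 ** x ** e 3"
    and uw: "u ** w \<noteq> 0"
    and U_def: "U = {mscale c (u + w) + v | c v. v \<in> V}"
  shows "mathieu_subspace U \<and> V \<subset> U \<and> \<not> maximal_mathieu_subspace V"
proof -
  interpret B: blk e t using idem orth sum_id by unfold_locales
  have VB: "V = {X. B.blow X \<and> (\<Sum>i=1..t. \<sigma> i * trace (e i ** X ** e i)) = 0}"
    unfolding V_def B.blow_def by simp
  have Vsub: "F_subspace V" unfolding VB by (rule B.S_sub)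
  have r: "1 \<in> {1..t}" "2 \<in> {1..t}" "3 \<in> {1..t}" using t3 by auto
  have e11: "e 1 ** e 1 = e 1" and e22: "e 2 ** e 2 = e 2" and e33: "e 3 ** e 3 = e 3"
    using idem r by auto
  have e12: "e 1 ** e 2 = 0" and e23: "e 2 ** e 3 = 0" and e13: "e 1 ** e 3 = 0"
    using orth r by (auto simp del: One_nat_def)
  obtain x where x: "u = e 1 ** x ** e 2" using u_in by blast
  obtain y where y: "w = e 2 ** y ** e 3" using w_in by blast
  have u1: "e 1 ** u = u" by (simp add: x matrix_mul_assoc e11)
  have u2: "u ** e 2 = u" by (simp add: x matrix_mul_assoc[symmetric] e22)
  have u3: "u ** e 3 = 0" by (simp add: x matrix_mul_assoc[symmetric] e23)
  have w1: "e 1 ** w = 0" by (simp add: y matrix_mul_assoc e12)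
  have w2: "e 2 ** w = w" by (simp add: y matrix_mul_assoc e22)
  have w3: "w ** e 3 = w" by (simp add: y matrix_mul_assoc[symmetric] e33)
  have unz: "u \<noteq> 0" using uw by auto
  define NN where "NN = u + w"
  have N12: "e 1 ** NN ** e 2 = u"
    by (simp add: NN_def matrix_add_ldistrib matrix_add_rdistrib' u1 u2 w1)
  have N13: "e 1 ** NN ** e 3 = 0"
    by (simp add: NN_def matrix_add_ldistrib matrix_add_rdistrib' u1 u3 w1)
  have U': "U = {mscale c NN + v | c v. v \<in> V}" by (simp add: U_def NN_def)
  have blowV: "X \<in> V \<Longrightarrow> B.blow X" for X by (simp add: VB)
  have blowV12: "X \<in> V \<Longrightarrow> e 1 ** X ** e 2 = 0" for X using r by (simp add: VB B.blow_def)
  have blowV13: "X \<in> V \<Longrightarrow> e 1 ** X ** e 3 = 0" for X using r by (simp add: VB B.blow_def)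
  have blowV23: "X \<in> V \<Longrightarrow> e 2 ** X ** e 3 = 0" for X using r by (simp add: VB B.blow_def)
  have UV: "X \<in> V" if X: "X \<in> U" "B.blow X" for X
  proof -
    obtain c v where cv: "X = mscale c NN + v" "v \<in> V" using X(1) U' by blast
    have "e 1 ** X ** e 2 = 0" using X(2) r by (simp add: B.blow_def)
    moreover have "e 1 ** X ** e 2 = mscale c u"
      by (simp add: cv matrix_add_ldistrib matrix_add_rdistrib' mscale_mult_left mscale_mult_right
          N12 blowV12)
    ultimately have "c = 0" using mscale_eq0 unz by metis
    then show ?thesis using cv by simp
  qed
  have e13U: "e 1 ** X ** e 3 = 0" if XU: "X \<in> U" for X
  proof -
    obtain c v where cv: "X = mscale c NN + v" "v \<in> V" using XU U' by blast
    show ?thesis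
      by (simp add: cv matrix_add_ldistrib matrix_add_rdistrib' mscale_mult_left mscale_mult_right
          N13 blowV13)
  qed
  have Usub: "F_subspace U"
    unfolding F_subspace_def
  proof (intro conjI ballI allI)
    have "0 = mscale 0 NN + 0" by simp
    moreover have "(0::'a^'n^'n) \<in> V" using Vsub by (simp add: F_subspace_def)
    ultimately show "0 \<in> U" unfolding U' by blast
  next
    fix X Y assume "X \<in> U" "Y \<in> U"
    then obtain c v c' v' where "X = mscale c NN + v" "v \<in> V" "Y = mscale c' NN + v'" "v' \<in> V"
      unfolding U' by blast
    moreover have "mscale c NN + v + (mscale c' NN + v') = mscale (c + c') NN + (v + v')"
      by (simp add: mscale_add2 algebra_simps)
    moreover have "v + v' \<in> V" using Vsub \<open>v \<in> V\<close> \<open>v' \<in> V\<close> by (simp add: F_subspace_def)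
    ultimately show "X + Y \<in> U" unfolding U' by blast
  next
    fix d X assume "X \<in> U"
    then obtain c v where "X = mscale c NN + v" "v \<in> V" unfolding U' by blast
    moreover have "mscale d (mscale c NN + v) = mscale (d * c) NN + mscale d v"
      by (simp add: mscale_add mscale_mscale)
    moreover have "mscale d v \<in> V" using Vsub \<open>v \<in> V\<close> by (simp add: F_subspace_def)
    ultimately show "mscale d X \<in> U" unfolding U' by blast
  qed
  have VU: "V \<subseteq> U"
  proof
    fix v assume "v \<in> V"
    moreover have "v = mscale 0 NN + v" by simp
    ultimately show "v \<in> U" unfolding U' by blast
  qed
  have NU: "NN \<in> U"
  proof -
    have "NN = mscale 1 NN + 0" by simp
    moreover have "(0::'a^'n^'n) \<in> V" using Vsub by (simp add: F_subspace_def)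
    ultimately show ?thesis unfolding U' by blast
  qed
  have NV: "NN \<notin> V" using blowV12 N12 unz by metis
  have Ups: "U \<noteq> UNIV"
  proof
    assume "U = UNIV"
    then have "u ** w \<in> U" by simp
    then have "e 1 ** (u ** w) ** e 3 = 0" by (rule e13U)
    moreover have "e 1 ** (u ** w) ** e 3 = u ** w"
      by (simp add: matrix_mul_assoc u1) (simp add: matrix_mul_assoc[symmetric] w3)
    ultimately show False using uw by simp
  qed
  have MU: "mathieu_subspace U"
    unfolding mathieu_subspace_def
  proof (intro conjI Usub allI impI)
    fix a b c :: "'a^'n^'n"
    assume pw: "\<forall>m\<ge>1. mpow a m \<in> U"
    have aU: "a \<in> U" using pw[rule_format, of 1] by (simp add: One_nat_def)
    have a2U: "a ** a \<in> U" using pw[rule_format, of 2] by (simp add: numeral_2_eq_2 mpow_Suc)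
    obtain c0 v where cv: "a = mscale c0 NN + v" "v \<in> V" using aU U' by blast
    have L: "e 1 ** a = mscale c0 u + e 1 ** v"
      by (simp add: cv matrix_add_ldistrib mscale_mult_right NN_def u1 w1)
    have R: "a ** e 3 = mscale c0 w + v ** e 3"
      by (simp add: cv matrix_add_rdistrib' mscale_mult_left NN_def u3 w3)
    have z1: "u ** (v ** e 3) = 0"
    proof -
      have "u ** (v ** e 3) = u ** (e 2 ** v ** e 3)"
        by (simp add: matrix_mul_assoc u2)
      then show ?thesis using blowV23[OF cv(2)] by simp
    qed
    have z2: "e 1 ** v ** w = 0"
    proof -
      have "e 1 ** v ** w = e 1 ** v ** e 2 ** w"
        by (simp add: matrix_mul_assoc[symmetric] w2)
      then show ?thesis using blowV12[OF cv(2)] by simp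
    qed
    have z3: "e 1 ** v ** (v ** e 3) = 0"
    proof -
      have "B.blow (v ** v)" using blowV[OF cv(2)] by (intro B.blow_mult)
      then have "e 1 ** (v ** v) ** e 3 = 0" using r by (simp add: B.blow_def)
      then show ?thesis by (simp add: matrix_mul_assoc)
    qed
    have "e 1 ** (a ** a) ** e 3 = (e 1 ** a) ** (a ** e 3)"
      by (simp add: matrix_mul_assoc)
    also have "\<dots> = mscale (c0 * c0) (u ** w)"
      unfolding L R
      by (simp add: matrix_add_ldistrib matrix_add_rdistrib' mscale_mult_left mscale_mult_right
          mscale_mscale z1 z2 z3)
    finally have "mscale (c0 * c0) (u ** w) = 0" using e13U[OF a2U] by simp
    then have "c0 * c0 = 0" using mscale_eq0 uw by blast
    then have "c0 = 0" by simp
    then have aV: "a \<in> V" using cv by simp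
    have "\<forall>m\<ge>1. mpow a m \<in> V"
      using pw UV B.blow_mpow[OF blowV[OF aV]] by blast
    then have "\<forall>m\<ge>1. mpow a m \<in> {X. B.blow X \<and> (\<Sum>i=1..t. \<sigma> i * trace (e i ** X ** e i)) = 0}"
      using VB by simp
    then obtain N where N: "mpow a N = 0" using B.nilpotent[OF sigma_cond] by blast
    have "\<forall>m\<ge>N. b ** mpow a m ** c \<in> U"
    proof (intro allI impI)
      fix m assume "m \<ge> N"
      then have "mpow a m = mpow a (m - N) ** mpow a N" by (simp flip: mpow_add)
      then have "mpow a m = 0" using N by simp
      moreover have "(0::'a^'n^'n) \<in> U" using Usub by (simp add: F_subspace_def)
      ultimately show "b ** mpow a m ** c \<in> U" by simp
    qed
    then show "\<exists>N. \<forall>m\<ge>N. b ** mpow a m ** c \<in> U" by blast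
  qed
  have VpU: "V \<subset> U" using VU NU NV by blast
  have "\<not> maximal_mathieu_subspace V"
    unfolding maximal_mathieu_subspace_def using MU Ups VpU by blast
  then show ?thesis using MU VpU by blast
qed


end
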